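(* Let $m\ge 3$, let $C$ be a set of $m$ candidates, and let $T$ be the set of all $m!$ strict rankings (linear orders) of $C$. Let $w=(w_1,\dots,w_m)$ satisfy $1=w_1\ge w_2\ge\cdots\ge w_m=0$, and for $t\in T$, $\alpha\in C$ let $\sigma_t(\alpha)=w_i$, where $i$ is the position of $\alpha$ in the ranking $t$. Suppose $n$ voters each independently choose a ranking uniformly at random from $T$ (Impartial Culture), let $N_t$ be the number of voters choosing $t$, let $|\alpha|=\sum_{t\in T}N_t\sigma_t(\alpha)$ be the score of $\alpha$, and let $S=(|\alpha|)_{\alpha\in C}$. Let $\bar w=(w_1+\cdots+w_m)/m$ and $\sigma_w^2=(w_1^2+\cdots+w_m^2)/m-\bar w^2$. Then, as $n\to\infty$, $$\frac{S-n\bar w\mathbf{1}}{\sqrt n}\ \xrightarrow{d}\ \sigma_w\left(\frac{m}{m-1}\right)^{1/2}\bigl(Z-\bar Z\mathbf{1}\bigr),$$ where $\mathbf 1$ is the all-ones vector indexed by $C$, $Z=(Z_\alpha)_{\alpha\in C}$ is a vector of independent standard normal random variables, $\bar Z=\frac1m\sum_{\alpha\in C}Z_\alpha$, and $\xrightarrow{d}$ denotes convergence in distribution. *)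

theory Defs
  imports "HOL-Probability.Probability"
begin

text \<open>Candidates are the elements of a finite type 'c, with m = CARD('c).
  A strict ranking t is encoded by its position function: t alpha is the
  position (in 1..m) of candidate alpha; t must be a bijection onto 1..m.\<close>

definition rankings :: "('c::finite \<Rightarrow> nat) set" where
  "rankings = {t. bij_betw t UNIV {1..CARD('c)}}"

definition sigma :: "(nat \<Rightarrow> real) \<Rightarrow> ('c \<Rightarrow> nat) \<Rightarrow> 'c \<Rightarrow> real" where
  "sigma w t \<alpha> = w (t \<alpha>)"

definition IC_profile :: "nat \<Rightarrow> (nat \<Rightarrow> ('c::finite \<Rightarrow> nat)) pmf" where
  "IC_profile n = Pi_pmf {..<n} undefined (\<lambda>_. pmf_of_set rankings)"

definition N_count :: "nat \<Rightarrow> (nat \<Rightarrow> ('c \<Rightarrow> nat)) \<Rightarrow> ('c \<Rightarrow> nat) \<Rightarrow> nat" where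
  "N_count n p t = card {i. i < n \<and> p i = t}"

definition score :: "(nat \<Rightarrow> real) \<Rightarrow> nat \<Rightarrow> (nat \<Rightarrow> ('c::finite \<Rightarrow> nat)) \<Rightarrow> real ^ 'c" where
  "score w n p = (\<chi> \<alpha>. \<Sum>t\<in>rankings. real (N_count n p t) * sigma w t \<alpha>)"

definition wbar :: "(nat \<Rightarrow> real) \<Rightarrow> nat \<Rightarrow> real" where
  "wbar w m = (\<Sum>i=1..m. w i) / real m"

definition var_w :: "(nat \<Rightarrow> real) \<Rightarrow> nat \<Rightarrow> real" where
  "var_w w m = (\<Sum>i=1..m. (w i)\<^sup>2) / real m - (wbar w m)\<^sup>2"

definition ones :: "real ^ 'c" where
  "ones = (\<chi> \<alpha>. 1)"

definition scaled_score_law :: "(nat \<Rightarrow> real) \<Rightarrow> nat \<Rightarrow> (real ^ 'c::finite) measure" where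
  "scaled_score_law w n =
     measure_pmf (map_pmf
       (\<lambda>p. (1 / sqrt (real n)) *\<^sub>R (score w n p - (real n * wbar w CARD('c)) *\<^sub>R ones))
       (IC_profile n))"

definition std_normal_vec :: "('c::finite \<Rightarrow> real) measure" where
  "std_normal_vec = (\<Pi>\<^sub>M \<alpha>\<in>UNIV. density lborel std_normal_density)"

definition limit_law :: "(nat \<Rightarrow> real) \<Rightarrow> (real ^ 'c::finite) measure" where
  "limit_law w =
     distr std_normal_vec borel
       (\<lambda>Z. (sqrt (var_w w CARD('c)) * sqrt (real CARD('c) / (real CARD('c) - 1))) *\<^sub>R
             ((\<chi> \<alpha>. Z \<alpha>) - ((\<Sum>\<beta>\<in>UNIV. Z \<beta>) / real CARD('c)) *\<^sub>R ones))"

definition conv_in_distr :: "(nat \<Rightarrow> 'a::topological_space measure) \<Rightarrow> 'a measure \<Rightarrow> bool" where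
  "conv_in_distr M L \<longleftrightarrow>
     (\<forall>f :: 'a \<Rightarrow> real. continuous_on UNIV f \<and> (\<exists>B. \<forall>x. \<bar>f x\<bar> \<le> B) \<longrightarrow>
        (\<lambda>n. integral\<^sup>L (M n) f) \<longlonglongrightarrow> integral\<^sup>L L f)"

end

theory Submission
  imports Defs
begin


lemma meas_sub:
  assumes "sets (borel::'a::topological_space measure) \<subseteq> sets N" "space N = UNIV"
    and "f \<in> borel_measurable (borel::'a measure)"
  shows "f \<in> borel_measurable N"
  using assms unfolding measurable_def by auto

lemma ridge_conv:
  fixes M :: "nat \<Rightarrow> (real ^ 'c::finite) measure" and L :: "(real ^ 'c) measure"
    and g :: "real \<Rightarrow> real"
  assumes M: "\<And>n. prob_space (M n)"
    and Ms: "\<And>n. sets borel \<subseteq> sets (M n)" "\<And>n. space (M n) = UNIV"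
    and L: "prob_space L"
    and Ls: "sets borel \<subseteq> sets L" "space L = UNIV"
    and ch: "\<And>u. (\<lambda>n. CLINT x|M n. iexp (u \<bullet> x)) \<longlonglongrightarrow> (CLINT x|L. iexp (u \<bullet> x))"
    and g: "\<And>t. isCont g t" "\<And>t. norm (g t) \<le> B"
  shows "(\<lambda>n. integral\<^sup>L (M n) (\<lambda>x. g (u \<bullet> x))) \<longlonglongrightarrow> integral\<^sup>L L (\<lambda>x. g (u \<bullet> x))"
proof -
  have um: "(\<lambda>x::real^'c. u \<bullet> x) \<in> borel_measurable borel"
    by (intro borel_measurable_continuous_onI continuous_intros)
  have umM: "(\<lambda>x::real^'c. u \<bullet> x) \<in> borel_measurable (M n)" for n using meas_sub[OF Ms um] .
  have umL: "(\<lambda>x::real^'c. u \<bullet> x) \<in> borel_measurable L" using meas_sub[OF Ls um] .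
  define \<mu> where "\<mu> n = distr (M n) borel (\<lambda>x. u \<bullet> x)" for n
  define \<nu> where "\<nu> = distr L borel (\<lambda>x. u \<bullet> x)"
  have rd: "real_distribution (\<mu> n)" for n
    unfolding \<mu>_def by (rule prob_space.real_distribution_distr[OF M umM])
  have rdL: "real_distribution \<nu>"
    unfolding \<nu>_def by (rule prob_space.real_distribution_distr[OF L umL])
  have cm: "char (\<mu> n) t = (CLINT x|M n. iexp ((t *\<^sub>R u) \<bullet> x))" for n t
    unfolding \<mu>_def char_def
    by (subst integral_distr[OF umM]) (auto simp: inner_scaleR_left)
  have cL: "char \<nu> t = (CLINT x|L. iexp ((t *\<^sub>R u) \<bullet> x))" for t
    unfolding \<nu>_def char_def
    by (subst integral_distr[OF umL]) (auto simp: inner_scaleR_left)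
  have wc: "weak_conv_m \<mu> \<nu>"
    by (rule levy_continuity[OF rd rdL]) (unfold cm cL, rule ch)
  have "(\<lambda>n. integral\<^sup>L (\<mu> n) g) \<longlonglongrightarrow> integral\<^sup>L \<nu> g"
    by (rule weak_conv_imp_integral_bdd_continuous_conv[OF rd rdL wc g])
  moreover have gm: "g \<in> borel_measurable borel"
    using g by (intro borel_measurable_continuous_onI continuous_at_imp_continuous_on) auto
  ultimately show ?thesis
    unfolding \<mu>_def \<nu>_def by (simp add: integral_distr[OF umM gm] integral_distr[OF umL gm])
qed

inductive trig :: "(real ^ 'c::finite \<Rightarrow> real) \<Rightarrow> bool" where
  tcos: "trig (\<lambda>x. cos (u \<bullet> x + c))"
| tadd: "trig f \<Longrightarrow> trig g \<Longrightarrow> trig (\<lambda>x. f x + g x)"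
| tscale: "trig f \<Longrightarrow> trig (\<lambda>x. a * f x)"

lemma trig_eq: "trig f \<Longrightarrow> (\<And>x. f x = g x) \<Longrightarrow> trig g"
proof -
  assume "trig f" "\<And>x. f x = g x"
  then have "f = g" by auto
  with \<open>trig f\<close> show ?thesis by simp
qed

lemma trig_const: "trig (\<lambda>x. c)"
  by (rule trig_eq[OF tscale[OF tcos[of 0 0], of c]]) simp

lemma trig_cos_mult:
  assumes "trig g" shows "trig (\<lambda>x. cos (u \<bullet> x + c) * g x)"
  using assms
proof induction
  case (tcos v d)
  have "trig (\<lambda>x. (1/2) * (cos ((u - v) \<bullet> x + (c - d)) + cos ((u + v) \<bullet> x + (c + d))))"
    by (intro tscale tadd trig.tcos)
  then show ?case
    by (rule trig_eq) (simp add: cos_times_cos inner_diff_left inner_add_left algebra_simps)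
next
  case (tadd f g)
  then show ?case by (rule_tac trig_eq[OF trig.tadd[OF tadd.IH]]) (simp add: algebra_simps)
next
  case (tscale f a)
  then show ?case by (rule_tac trig_eq[OF trig.tscale[OF tscale.IH, of a]]) (simp add: algebra_simps)
qed

lemma trig_mult:
  assumes "trig f" "trig g" shows "trig (\<lambda>x. f x * g x)"
  using assms
proof induction
  case (tcos u c)
  then show ?case by (rule trig_cos_mult)
next
  case (tadd f1 f2)
  then show ?case by (rule_tac trig_eq[OF trig.tadd[OF tadd.IH]]) (simp_all add: algebra_simps)
next
  case (tscale f a)
  then show ?case by (rule_tac trig_eq[OF trig.tscale[OF tscale.IH, of a]]) (simp_all add: algebra_simps)
qed

lemma trig_bdd:
  assumes "trig f" shows "continuous_on UNIV f \<and> (\<exists>B. \<forall>x. \<bar>f x\<bar> \<le> B)"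
  using assms
proof induction
  case (tcos u c)
  have "\<forall>x. \<bar>cos (u \<bullet> x + c)\<bar> \<le> 1" by simp
  moreover have "continuous_on UNIV (\<lambda>x. cos (u \<bullet> x + c))" by (intro continuous_intros)
  ultimately show ?case by blast
next
  case (tadd f g)
  then obtain B1 B2 where "\<forall>x. \<bar>f x\<bar> \<le> B1" "\<forall>x. \<bar>g x\<bar> \<le> B2" by auto
  then have "\<forall>x. \<bar>f x + g x\<bar> \<le> B1 + B2" by (metis abs_triangle_ineq add_mono order_trans)
  with tadd show ?case by (auto intro!: continuous_intros)
next
  case (tscale f a)
  then obtain B1 where B1: "\<forall>x. \<bar>f x\<bar> \<le> B1" by auto
  then have "\<forall>x. \<bar>a * f x\<bar> \<le> \<bar>a\<bar> * B1" by (simp add: abs_mult mult_left_mono)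
  with tscale show ?case by (auto intro!: continuous_intros)
qed

lemma trig_approx:
  fixes f :: "real ^ 'c::finite \<Rightarrow> real"
  assumes cont: "continuous_on UNIV f" and bnd: "\<And>x. \<bar>f x\<bar> \<le> B" and R: "R > 0" and e: "e > 0"
  shows "\<exists>\<tau>. trig \<tau> \<and> (\<forall>x. (\<forall>\<alpha>. \<bar>x $ \<alpha>\<bar> \<le> R) \<longrightarrow> \<bar>f x - \<tau> x\<bar> < e) \<and> (\<forall>x. \<bar>\<tau> x\<bar> \<le> B + e)"
proof -
  define S :: "(real ^ 'c) set" where "S = cbox (-1) 1"
  have memS: "s \<in> S \<longleftrightarrow> (\<forall>\<alpha>. -1 \<le> s $ \<alpha> \<and> s $ \<alpha> \<le> 1)" for s
    unfolding S_def mem_box_cart by simp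
  define clip :: "real \<Rightarrow> real" where "clip t = max (-1) (min 1 t)" for t
  define h :: "real ^ 'c \<Rightarrow> real" where "h s = f (\<chi> \<alpha>. R * arcsin (clip (s $ \<alpha>)))" for s
  define \<Psi> :: "real ^ 'c \<Rightarrow> real ^ 'c" where "\<Psi> x = (\<chi> \<alpha>. sin (x $ \<alpha> / R))" for x
  define P where "P g \<longleftrightarrow> continuous_on S g \<and> (\<exists>\<tau>. trig \<tau> \<and> (\<forall>x. g (\<Psi> x) = \<tau> x))" for g
  have hcont: "continuous_on S h"
  proof -
    have "continuous_on UNIV (\<lambda>s::real^'c. \<chi> \<alpha>. R * arcsin (clip (s $ \<alpha>)))"
      unfolding clip_def by (intro continuous_intros) auto
    then have "continuous_on UNIV h"
      unfolding h_def using continuous_on_compose2[OF cont] by blast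
    then show ?thesis by (rule continuous_on_subset) simp
  qed
  have "\<exists>g. P g \<and> (\<forall>x\<in>S. \<bar>h x - g x\<bar> < e)"
  proof (rule Stone_Weierstrass_HOL[where P = P])
    show "compact S" unfolding S_def by simp
    show "P (\<lambda>x. c)" for c unfolding P_def using trig_const by auto
    show "continuous_on S g" if "P g" for g using that unfolding P_def by auto
    show "P (\<lambda>x. f1 x + f2 x)" if "P f1 \<and> P f2" for f1 f2
    proof -
      from that obtain t1 t2 where "trig t1" "trig t2" "\<forall>x. f1 (\<Psi> x) = t1 x" "\<forall>x. f2 (\<Psi> x) = t2 x"
        "continuous_on S f1" "continuous_on S f2" unfolding P_def by auto
      then show ?thesis unfolding P_def
        by (intro conjI continuous_intros exI[of _ "\<lambda>x. t1 x + t2 x"]) (auto intro: tadd)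
    qed
    show "P (\<lambda>x. f1 x * f2 x)" if "P f1 \<and> P f2" for f1 f2
    proof -
      from that obtain t1 t2 where "trig t1" "trig t2" "\<forall>x. f1 (\<Psi> x) = t1 x" "\<forall>x. f2 (\<Psi> x) = t2 x"
        "continuous_on S f1" "continuous_on S f2" unfolding P_def by auto
      then show ?thesis unfolding P_def
        by (intro conjI continuous_intros exI[of _ "\<lambda>x. t1 x * t2 x"]) (auto intro: trig_mult)
    qed
    show "\<exists>g. P g \<and> g x \<noteq> g y" if "x \<in> S \<and> y \<in> S \<and> x \<noteq> y" for x y
    proof -
      from that obtain \<alpha> where \<alpha>: "x $ \<alpha> \<noteq> y $ \<alpha>" by (auto simp: vec_eq_iff)
      have tr: "trig (\<lambda>z. cos (axis \<alpha> (1/R) \<bullet> z + (- (pi/2))))" by (rule tcos)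
      have "cos (axis \<alpha> (1/R) \<bullet> z + (- (pi/2))) = sin (z $ \<alpha> / R)" for z
      proof -
        have "cos (axis \<alpha> (1/R) \<bullet> z + (- (pi/2))) = cos (pi/2 - z $ \<alpha> / R)"
          by (subst cos_minus[symmetric]) (simp add: inner_axis')
        also have "\<dots> = sin (z $ \<alpha> / R)" by (simp add: sin_cos_eq)
        finally show ?thesis .
      qed
      then have "P (\<lambda>s. s $ \<alpha>)" unfolding P_def \<Psi>_def
        using tr by (auto intro!: continuous_intros exI[of _ "\<lambda>z. cos (axis \<alpha> (1/R) \<bullet> z + (- (pi/2)))"])
      with \<alpha> show ?thesis by blast
    qed
  qed (use hcont e in auto)
  then obtain g \<tau> where g: "\<forall>s\<in>S. \<bar>h s - g s\<bar> < e" and \<tau>: "trig \<tau>" "\<forall>x. g (\<Psi> x) = \<tau> x"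
    unfolding P_def by auto
  have \<Psi>S: "\<Psi> x \<in> S" for x unfolding memS \<Psi>_def by auto
  have close: "\<bar>h (\<Psi> x) - \<tau> x\<bar> < e" for x using g \<Psi>S \<tau> by metis
  have hf: "h (\<Psi> x) = f x" if "\<forall>\<alpha>. \<bar>x $ \<alpha>\<bar> \<le> R" for x
  proof -
    have "R * arcsin (clip (\<Psi> x $ \<alpha>)) = x $ \<alpha>" for \<alpha>
    proof -
      have le1: "\<bar>x $ \<alpha> / R\<bar> \<le> 1" using that[rule_format, of \<alpha>] R by (simp add: divide_le_eq_1 abs_divide)
      have "clip (\<Psi> x $ \<alpha>) = sin (x $ \<alpha> / R)" unfolding clip_def \<Psi>_def by simp
      moreover have "arcsin (sin (x $ \<alpha> / R)) = x $ \<alpha> / R"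
      proof (rule arcsin_sin)
        have "-1 \<le> x $ \<alpha> / R" "x $ \<alpha> / R \<le> 1" using le1 by arith+
        then show "- (pi / 2) \<le> x $ \<alpha> / R" "x $ \<alpha> / R \<le> pi / 2" using pi_ge_two by linarith+
      qed
      ultimately show ?thesis using R by simp
    qed
    then show ?thesis unfolding h_def by (simp add: vec_eq_iff[symmetric] vec_lambda_eta)
  qed
  show ?thesis
  proof (intro exI conjI allI impI)
    show "trig \<tau>" by fact
    fix x
    show "\<bar>f x - \<tau> x\<bar> < e" if "\<forall>\<alpha>. \<bar>x $ \<alpha>\<bar> \<le> R" using close[of x] hf[OF that] by simp
    have "\<bar>h (\<Psi> x)\<bar> \<le> B" unfolding h_def by (rule bnd)
    then show "\<bar>\<tau> x\<bar> \<le> B + e" using close[of x] by linarith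
  qed
qed

lemma tri3: "\<bar>(a::real) - b\<bar> \<le> \<bar>a - c\<bar> + \<bar>c - e\<bar> + \<bar>b - e\<bar>"
  by (simp add: abs_if)

lemma bc_int:
  fixes f :: "real ^ 'c::finite \<Rightarrow> real"
  assumes N: "prob_space N" "sets borel \<subseteq> sets N" "space N = UNIV"
    and f: "continuous_on UNIV f" "\<And>x. \<bar>f x\<bar> \<le> B"
  shows "integrable N f"
proof -
  interpret prob_space N by fact
  have "f \<in> borel_measurable N"
    by (rule meas_sub[OF N(2,3)]) (rule borel_measurable_continuous_onI[OF f(1)])
  then show ?thesis
    by (intro integrable_const_bound[of _ B]) (auto simp: f(2))
qed

definition tailf :: "real \<Rightarrow> real \<Rightarrow> real" where
  "tailf R t = min 1 (max 0 (\<bar>t\<bar> - R + 1))"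

lemma tailf_cont: "continuous_on UNIV (tailf R)" "isCont (tailf R) t"
  unfolding tailf_def by (intro continuous_intros)+

lemma tailf_bnd: "0 \<le> tailf R t" "tailf R t \<le> 1" "norm (tailf R t) \<le> 1" "\<bar>tailf R t\<bar> \<le> 1"
  unfolding tailf_def by auto

lemma tailf_cont_vec: "continuous_on UNIV (\<lambda>x::real^'c::finite. tailf R (x $ \<alpha>))"
  by (rule continuous_on_compose2[OF tailf_cont(1)]) (auto intro: continuous_intros)

lemma err_bound:
  fixes f \<tau> :: "real ^ 'c::finite \<Rightarrow> real"
  assumes N: "prob_space N" "sets borel \<subseteq> sets N" "space N = UNIV"
    and f: "continuous_on UNIV f" "\<And>x. \<bar>f x\<bar> \<le> B1"
    and \<tau>: "continuous_on UNIV \<tau>" "\<And>x. \<bar>\<tau> x\<bar> \<le> B2"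
    and pw: "\<And>x. \<bar>f x - \<tau> x\<bar> \<le> d + C * (\<Sum>\<alpha>\<in>UNIV. tailf R (x $ \<alpha>))"
  shows "\<bar>integral\<^sup>L N f - integral\<^sup>L N \<tau>\<bar> \<le> d + C * (\<Sum>\<alpha>\<in>UNIV. integral\<^sup>L N (\<lambda>x. tailf R (x $ \<alpha>)))"
proof -
  interpret prob_space N by fact
  have if_: "integrable N f" by (rule bc_int[OF N f])
  have it: "integrable N \<tau>" by (rule bc_int[OF N \<tau>])
  have iphi: "integrable N (\<lambda>x. tailf R (x $ \<alpha>))" for \<alpha>
    by (rule bc_int[OF N tailf_cont_vec]) (rule tailf_bnd(4))
  have isum: "integrable N (\<lambda>x. \<Sum>\<alpha>\<in>UNIV. tailf R (x $ \<alpha>))"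
    using Bochner_Integration.integrable_sum[where f="\<lambda>\<alpha> x. tailf R (x $ \<alpha>)" and I=UNIV and M=N] iphi by simp
  have ib: "integrable N (\<lambda>x. d + C * (\<Sum>\<alpha>\<in>UNIV. tailf R (x $ \<alpha>)))"
    using isum by (intro Bochner_Integration.integrable_add Bochner_Integration.integrable_mult_right) auto
  have "\<bar>integral\<^sup>L N f - integral\<^sup>L N \<tau>\<bar> = \<bar>integral\<^sup>L N (\<lambda>x. f x - \<tau> x)\<bar>"
    using if_ it by (simp add: Bochner_Integration.integral_diff)
  also have "\<dots> \<le> integral\<^sup>L N (\<lambda>x. d + C * (\<Sum>\<alpha>\<in>UNIV. tailf R (x $ \<alpha>)))"
    using if_ it ib pw by (intro integral_abs_bound_integral) auto
  also have "\<dots> = d + C * (\<Sum>\<alpha>\<in>UNIV. integral\<^sup>L N (\<lambda>x. tailf R (x $ \<alpha>)))"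
    using isum iphi by (simp add: Bochner_Integration.integral_add Bochner_Integration.integral_mult_right Bochner_Integration.integral_sum prob_space)
  finally show ?thesis .
qed

context
  fixes M :: "nat \<Rightarrow> (real ^ 'c::finite) measure" and L :: "(real ^ 'c) measure"
  assumes M: "\<And>n. prob_space (M n)"
    and Ms: "\<And>n. sets borel \<subseteq> sets (M n)" "\<And>n. space (M n) = UNIV"
    and L: "prob_space L"
    and Ls: "sets borel \<subseteq> sets L" "space L = UNIV"
    and ch: "\<And>u. (\<lambda>n. CLINT x|M n. iexp (u \<bullet> x)) \<longlonglongrightarrow> (CLINT x|L. iexp (u \<bullet> x))"
begin

lemma trig_conv: "trig \<tau> \<Longrightarrow> (\<lambda>n. integral\<^sup>L (M n) \<tau>) \<longlonglongrightarrow> integral\<^sup>L L \<tau>"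
proof (induction rule: trig.induct)
  case (tcos u c)
  show ?case
    by (rule ridge_conv[OF M Ms L Ls ch, of "\<lambda>t. cos (t + c)" 1]) (auto intro: continuous_intros)
next
  case (tadd f g)
  obtain B1 where "\<forall>x. \<bar>f x\<bar> \<le> B1" and cf: "continuous_on UNIV f" using trig_bdd[OF tadd.hyps(1)] by auto
  then have iF: "integrable (M n) f" "integrable L f" for n
    using bc_int[OF M Ms, of f B1] bc_int[OF L Ls, of f B1] by auto
  obtain B2 where "\<forall>x. \<bar>g x\<bar> \<le> B2" and cg: "continuous_on UNIV g" using trig_bdd[OF tadd.hyps(2)] by auto
  then have iG: "integrable (M n) g" "integrable L g" for n
    using bc_int[OF M Ms, of g B2] bc_int[OF L Ls, of g B2] by auto
  show ?case using tendsto_add[OF tadd.IH] iF iG by (simp add: Bochner_Integration.integral_add)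
next
  case (tscale f a)
  then show ?case by (simp add: tendsto_mult_left)
qed

theorem levy_multi: "conv_in_distr M L"
  unfolding conv_in_distr_def
proof (intro allI impI)
  fix f :: "real ^ 'c \<Rightarrow> real"
  assume "continuous_on UNIV f \<and> (\<exists>B. \<forall>x. \<bar>f x\<bar> \<le> B)"
  then obtain B where cf: "continuous_on UNIV f" and bf: "\<And>x. \<bar>f x\<bar> \<le> B" by auto
  have B0: "0 \<le> B" using bf[of 0] by linarith
  show "(\<lambda>n. integral\<^sup>L (M n) f) \<longlonglongrightarrow> integral\<^sup>L L f"
    unfolding tendsto_iff
  proof (intro allI impI)
    fix e :: real assume e: "e > 0"
    define d where "d = e / 5"
    have d: "d > 0" using e by (simp add: d_def)
    define Tinf where "Tinf k = (\<Sum>\<alpha>\<in>UNIV. integral\<^sup>L L (\<lambda>x. tailf (real k + 1) (x $ \<alpha>)))" for k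
    have "(\<lambda>k. Tinf k) \<longlonglongrightarrow> (\<Sum>\<alpha>\<in>(UNIV::'c set). 0)"
      unfolding Tinf_def
    proof (intro tendsto_sum)
      fix \<alpha> :: 'c
      interpret L: prob_space L by (rule L)
      have "(\<lambda>k. integral\<^sup>L L (\<lambda>x. tailf (real k + 1) (x $ \<alpha>))) \<longlonglongrightarrow> integral\<^sup>L L (\<lambda>x. 0)"
      proof (rule integral_dominated_convergence[where w = "\<lambda>_. 1"])
        show "(\<lambda>x. tailf (real k + 1) (x $ \<alpha>)) \<in> borel_measurable L" for k
          by (rule meas_sub[OF Ls]) (rule borel_measurable_continuous_onI[OF tailf_cont_vec])
        show "(\<lambda>x. 0::real) \<in> borel_measurable L" by simp
        show "integrable L (\<lambda>_. 1::real)" by simp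
        show "AE x in L. (\<lambda>k. tailf (real k + 1) (x $ \<alpha>)) \<longlonglongrightarrow> 0"
        proof (rule AE_I2)
          fix x :: "real ^ 'c"
          have "eventually (\<lambda>k. tailf (real k + 1) (x $ \<alpha>) = 0) sequentially"
          proof (rule eventually_sequentiallyI[of "nat \<lceil>\<bar>x $ \<alpha>\<bar>\<rceil>"])
            fix k assume "nat \<lceil>\<bar>x $ \<alpha>\<bar>\<rceil> \<le> k"
            then have "real (nat \<lceil>\<bar>x $ \<alpha>\<bar>\<rceil>) \<le> real k" by (rule of_nat_mono)
            moreover have "\<bar>x $ \<alpha>\<bar> \<le> real (nat \<lceil>\<bar>x $ \<alpha>\<bar>\<rceil>)" by (rule real_nat_ceiling_ge)
            ultimately have "\<bar>x $ \<alpha>\<bar> - (real k + 1) + 1 \<le> 0" by linarith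
            then show "tailf (real k + 1) (x $ \<alpha>) = 0" unfolding tailf_def by (simp add: max_absorb1)
          qed
          then show "(\<lambda>k. tailf (real k + 1) (x $ \<alpha>)) \<longlonglongrightarrow> 0" by (rule tendsto_eventually)
        qed
        show "AE x in L. norm (tailf (real k + 1) (x $ \<alpha>)) \<le> 1" for k
          by (simp add: tailf_bnd(4))
      qed
      then show "(\<lambda>k. integral\<^sup>L L (\<lambda>x. tailf (real k + 1) (x $ \<alpha>))) \<longlonglongrightarrow> 0" by simp
    qed
    then have "(\<lambda>k. 2 * B * Tinf k) \<longlonglongrightarrow> 0"
      using tendsto_mult_left[of Tinf 0 sequentially "2 * B"] by simp
    then have "eventually (\<lambda>k. 2 * B * Tinf k < d) sequentially"
      using d by (rule order_tendstoD(2))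
    then obtain N where "\<forall>n\<ge>N. 2 * B * Tinf n < d" unfolding eventually_sequentially by blast
    then have k: "2 * B * Tinf N < d" by simp
    define k where "k = N"
    note k = k[folded k_def]
    define R where "R = real k + 1"
    have R: "R > 0" unfolding R_def by simp
    obtain \<tau> where \<tau>: "trig \<tau>" "\<forall>x. (\<forall>\<alpha>. \<bar>x $ \<alpha>\<bar> \<le> R) \<longrightarrow> \<bar>f x - \<tau> x\<bar> < d" "\<forall>x. \<bar>\<tau> x\<bar> \<le> B + d"
      using trig_approx[OF cf bf R d] by blast
    have c\<tau>: "continuous_on UNIV \<tau>" using trig_bdd[OF \<tau>(1)] by auto
    have pw: "\<bar>f x - \<tau> x\<bar> \<le> d + 2 * B * (\<Sum>\<alpha>\<in>UNIV. tailf R (x $ \<alpha>))" for x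
    proof (cases "\<forall>\<alpha>. \<bar>x $ \<alpha>\<bar> \<le> R")
      case True
      have "0 \<le> 2 * B * (\<Sum>\<alpha>\<in>UNIV. tailf R (x $ \<alpha>))"
        using B0 by (intro mult_nonneg_nonneg sum_nonneg) (auto simp: tailf_bnd)
      moreover have "\<bar>f x - \<tau> x\<bar> < d" using \<tau>(2) True by blast
      ultimately show ?thesis by linarith
    next
      case False
      then obtain \<alpha> where a: "\<bar>x $ \<alpha>\<bar> > R" by (auto simp: not_le)
      then have "tailf R (x $ \<alpha>) = 1" unfolding tailf_def by simp
      moreover have "tailf R (x $ \<alpha>) \<le> (\<Sum>\<alpha>\<in>UNIV. tailf R (x $ \<alpha>))"
        by (rule member_le_sum) (auto simp: tailf_bnd)
      ultimately have "1 \<le> (\<Sum>\<alpha>\<in>UNIV. tailf R (x $ \<alpha>))" by simp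
      then have "2 * B * 1 \<le> 2 * B * (\<Sum>\<alpha>\<in>UNIV. tailf R (x $ \<alpha>))"
        by (rule mult_left_mono) (use B0 in simp)
      then have "2 * B \<le> 2 * B * (\<Sum>\<alpha>\<in>UNIV. tailf R (x $ \<alpha>))" by simp
      moreover have "\<bar>f x - \<tau> x\<bar> \<le> B + (B + d)" using bf[of x] \<tau>(3)[rule_format, of x] abs_triangle_ineq4[of "f x" "\<tau> x"] by (meson add_mono order_trans)
      ultimately show ?thesis by linarith
    qed
    define Tn where "Tn n = (\<Sum>\<alpha>\<in>UNIV. integral\<^sup>L (M n) (\<lambda>x. tailf R (x $ \<alpha>)))" for n
    have "(\<lambda>n. Tn n) \<longlonglongrightarrow> (\<Sum>\<alpha>\<in>UNIV. integral\<^sup>L L (\<lambda>x. tailf R (x $ \<alpha>)))"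
      unfolding Tn_def
    proof (intro tendsto_sum)
      fix \<alpha> :: 'c
      have eq: "(\<lambda>x::real^'c. tailf R (x $ \<alpha>)) = (\<lambda>x. tailf R (axis \<alpha> 1 \<bullet> x))"
        by (simp add: inner_axis')
      show "(\<lambda>n. integral\<^sup>L (M n) (\<lambda>x. tailf R (x $ \<alpha>))) \<longlonglongrightarrow> integral\<^sup>L L (\<lambda>x. tailf R (x $ \<alpha>))"
        unfolding eq by (rule ridge_conv[OF M Ms L Ls ch]) (auto intro: tailf_cont tailf_bnd)
    qed
    then have "(\<lambda>n. 2 * B * Tn n) \<longlonglongrightarrow> 2 * B * Tinf k"
      unfolding Tinf_def R_def by (intro tendsto_mult_left)
    then have ev1: "eventually (\<lambda>n. 2 * B * Tn n < d) sequentially"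
      using k by (rule order_tendstoD(2))
    have "(\<lambda>n. integral\<^sup>L (M n) \<tau>) \<longlonglongrightarrow> integral\<^sup>L L \<tau>" by (rule trig_conv[OF \<tau>(1)])
    then have ev2: "eventually (\<lambda>n. dist (integral\<^sup>L (M n) \<tau>) (integral\<^sup>L L \<tau>) < d) sequentially"
      using d unfolding tendsto_iff by blast
    have boundL: "\<bar>integral\<^sup>L L f - integral\<^sup>L L \<tau>\<bar> \<le> d + 2 * B * Tinf k"
      unfolding Tinf_def R_def[symmetric]
      by (rule err_bound[OF L Ls cf bf c\<tau> \<tau>(3)[rule_format] pw])
    show "eventually (\<lambda>n. dist (integral\<^sup>L (M n) f) (integral\<^sup>L L f) < e) sequentially"
      using ev1 ev2
    proof eventually_elim
      case (elim n)
      have bn: "\<bar>integral\<^sup>L (M n) f - integral\<^sup>L (M n) \<tau>\<bar> \<le> d + 2 * B * Tn n"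
        unfolding Tn_def
        by (rule err_bound[OF M Ms cf bf c\<tau> \<tau>(3)[rule_format] pw])
      have "\<bar>integral\<^sup>L (M n) f - integral\<^sup>L L f\<bar> \<le> \<bar>integral\<^sup>L (M n) f - integral\<^sup>L (M n) \<tau>\<bar> + \<bar>integral\<^sup>L (M n) \<tau> - integral\<^sup>L L \<tau>\<bar> + \<bar>integral\<^sup>L L f - integral\<^sup>L L \<tau>\<bar>"
        by (rule tri3)
      also have "\<dots> < 5 * d"
      proof -
        have "\<bar>integral\<^sup>L (M n) \<tau> - integral\<^sup>L L \<tau>\<bar> < d" using elim(2) by (simp add: dist_real_def)
        then show ?thesis using bn boundL elim(1) k by linarith
      qed
      finally show ?case unfolding dist_real_def d_def by simp
    qed
  qed
qed

end



lemma rank_fin: "finite (rankings :: ('c::finite \<Rightarrow> nat) set)"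
proof -
  have "rankings \<subseteq> (PiE (UNIV::'c set) (\<lambda>_. {1..CARD('c)}))"
    unfolding rankings_def by (auto simp: bij_betw_def PiE_def extensional_def)
  moreover have "finite (PiE (UNIV::'c set) (\<lambda>_. {1..CARD('c)}))" by (intro finite_PiE) auto
  ultimately show ?thesis by (rule finite_subset)
qed

lemma rank_ne: "(rankings :: ('c::finite \<Rightarrow> nat) set) \<noteq> {}"
proof -
  have "card (UNIV::'c set) = card {1..CARD('c)}" by simp
  then obtain h where "bij_betw h (UNIV::'c set) {1..CARD('c)}"
    using finite_same_card_bij[of "UNIV::'c set" "{1..CARD('c)}"] by auto
  then show ?thesis unfolding rankings_def by auto
qed

lemma rank_card_pos: "card (rankings :: ('c::finite \<Rightarrow> nat) set) > 0"
  using rank_fin rank_ne by (simp add: card_gt_0_iff)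

lemma rank_range: "t \<in> rankings \<Longrightarrow> t (\<alpha>::'c::finite) \<in> {1..CARD('c)}"
  unfolding rankings_def bij_betw_def by auto

lemma rank_sum: "t \<in> rankings \<Longrightarrow> (\<Sum>\<alpha>\<in>UNIV. g (t (\<alpha>::'c::finite))) = (\<Sum>i=1..CARD('c). g i)"
  unfolding rankings_def by (auto intro: sum.reindex_bij_betw)

lemma rank_perm_sum:
  assumes "bij (\<pi>::'c::finite \<Rightarrow> 'c)"
  shows "(\<Sum>t\<in>rankings. G (t \<circ> \<pi>)) = (\<Sum>t\<in>rankings. G t)"
proof (rule sum.reindex_bij_betw)
  show "bij_betw (\<lambda>t. t \<circ> \<pi>) rankings rankings"
  proof (rule bij_betw_byWitness[where f' = "\<lambda>t. t \<circ> inv \<pi>"])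
    show "\<forall>a\<in>rankings. a \<circ> \<pi> \<circ> inv \<pi> = a" using assms
      by (auto simp: fun_eq_iff surj_f_inv_f bij_is_surj)
    show "\<forall>a\<in>rankings. a \<circ> inv \<pi> \<circ> \<pi> = a" using assms
      by (auto simp: fun_eq_iff inv_f_f bij_is_inj)
    show "(\<lambda>t. t \<circ> \<pi>) ` rankings \<subseteq> rankings"
      using assms unfolding rankings_def by (auto intro: bij_betw_trans)
    show "(\<lambda>t. t \<circ> inv \<pi>) ` rankings \<subseteq> rankings"
      using assms bij_imp_bij_inv unfolding rankings_def by (auto intro: bij_betw_trans)
  qed
qed

definition swp :: "'a \<Rightarrow> 'a \<Rightarrow> 'a \<Rightarrow> 'a" where
  "swp a b x = (if x = a then b else if x = b then a else x)"

lemma swp_bij: "bij (swp a b)"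
proof -
  have "swp a b \<circ> swp a b = id" by (auto simp: swp_def fun_eq_iff)
  then show ?thesis by (metis o_bij)
qed

lemma E1:
  fixes g :: "nat \<Rightarrow> real"
  shows "(\<Sum>t\<in>rankings. g (t (\<alpha>::'c::finite))) = real (card (rankings::('c \<Rightarrow> nat) set)) / CARD('c) * (\<Sum>i=1..CARD('c). g i)"
proof -
  have eq: "(\<Sum>t\<in>rankings. g (t \<beta>)) = (\<Sum>t\<in>rankings. g (t (\<alpha>::'c)))" for \<beta> :: 'c
    using rank_perm_sum[OF swp_bij[of \<beta> \<alpha>], of "\<lambda>t. g (t \<beta>)"] by (simp add: swp_def)
  have "(\<Sum>\<beta>\<in>(UNIV::'c set). \<Sum>t\<in>rankings. g (t \<beta>)) = (\<Sum>\<beta>\<in>(UNIV::'c set). \<Sum>t\<in>rankings. g (t \<alpha>))"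
    by (rule sum.cong[OF refl]) (rule eq)
  then have "real CARD('c) * (\<Sum>t\<in>rankings. g (t \<alpha>)) = (\<Sum>\<beta>\<in>(UNIV::'c set). \<Sum>t\<in>rankings. g (t \<beta>))"
    by simp
  also have "\<dots> = (\<Sum>t\<in>rankings. \<Sum>\<beta>\<in>UNIV. g (t (\<beta>::'c)))" by (rule sum.swap)
  also have "\<dots> = (\<Sum>t\<in>(rankings::('c \<Rightarrow> nat) set). \<Sum>i=1..CARD('c). g i)"
    by (intro sum.cong refl rank_sum)
  also have "\<dots> = real (card (rankings::('c \<Rightarrow> nat) set)) * (\<Sum>i=1..CARD('c). g i)" by simp
  finally show ?thesis by (simp add: field_simps)
qed

lemma E2:
  fixes d :: "nat \<Rightarrow> real"
  assumes d0: "(\<Sum>i=1..CARD('c). d i) = 0" and ab: "(\<alpha>::'c::finite) \<noteq> \<beta>"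
  shows "(real CARD('c) - 1) * (\<Sum>t\<in>rankings. d (t \<alpha>) * d (t \<beta>)) = - (\<Sum>t\<in>rankings. d (t \<alpha>) ^ 2)"
proof -
  have eq: "(\<Sum>t\<in>rankings. d (t \<alpha>) * d (t \<gamma>)) = (\<Sum>t\<in>rankings. d (t \<alpha>) * d (t \<beta>))"
    if "\<gamma> \<noteq> \<alpha>" for \<gamma>
    using rank_perm_sum[OF swp_bij[of \<gamma> \<beta>], of "\<lambda>t. d (t \<alpha>) * d (t \<gamma>)"] that ab
    by (simp add: swp_def)
  have z: "(\<Sum>\<gamma>\<in>UNIV. d (t \<gamma>)) = 0" if "t \<in> rankings" for t :: "'c \<Rightarrow> nat"
    using rank_sum[OF that, of d] d0 by simp
  have "0 = (\<Sum>t\<in>(rankings::('c \<Rightarrow> nat) set). d (t \<alpha>) * (\<Sum>\<gamma>\<in>UNIV. d (t \<gamma>)))"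
    by (rule sym, rule sum.neutral) (simp add: z)
  also have "\<dots> = (\<Sum>\<gamma>\<in>UNIV. \<Sum>t\<in>rankings. d (t \<alpha>) * d (t \<gamma>))"
    unfolding sum_distrib_left by (rule sum.swap)
  also have "\<dots> = (\<Sum>t\<in>rankings. d (t \<alpha>) * d (t \<alpha>)) + (\<Sum>\<gamma>\<in>UNIV - {\<alpha>}. \<Sum>t\<in>rankings. d (t \<alpha>) * d (t \<gamma>))"
    by (subst sum.remove[of UNIV \<alpha>]) auto
  also have "(\<Sum>\<gamma>\<in>UNIV - {\<alpha>}. \<Sum>t\<in>rankings. d (t \<alpha>) * d (t \<gamma>)) = (\<Sum>\<gamma>\<in>UNIV - {\<alpha>}. \<Sum>t\<in>rankings. d (t \<alpha>) * d (t \<beta>))"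
    by (intro sum.cong refl eq) auto
  also have "\<dots> = (real CARD('c) - 1) * (\<Sum>t\<in>rankings. d (t \<alpha>) * d (t \<beta>))"
    by (simp add: card_Diff_singleton of_nat_diff)
  finally show ?thesis by (simp add: power2_eq_square)
qed

lemma sum_sq_centered:
  fixes u :: "'a \<Rightarrow> real"
  assumes "finite A" "A \<noteq> {}"
  shows "(\<Sum>x\<in>A. (u x - (\<Sum>y\<in>A. u y) / card A)^2) = (\<Sum>x\<in>A. (u x)^2) - (\<Sum>y\<in>A. u y)^2 / card A"
proof -
  define a where "a = (\<Sum>y\<in>A. u y) / card A"
  define S where "S = (\<Sum>y\<in>A. u y)"
  have c: "real (card A) > 0" using assms by (simp add: card_gt_0_iff)
  have "(\<Sum>x\<in>A. (u x - a)^2) = (\<Sum>x\<in>A. (u x)^2 - 2 * a * u x + a^2)"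
    by (intro sum.cong refl) (simp add: power2_diff mult_ac)
  also have "\<dots> = (\<Sum>x\<in>A. (u x)^2) - 2 * a * S + card A * a^2"
    by (simp add: sum.distrib sum_subtractf sum_distrib_left S_def)
  also have "\<dots> = (\<Sum>x\<in>A. (u x)^2) - S^2 / card A"
    using c unfolding a_def S_def by (simp add: field_simps power2_eq_square)
  finally show ?thesis unfolding a_def S_def .
qed
lemma alg1: "m - 1 > (0::real) \<Longrightarrow> (N * v + N * v/(m-1)) * Q - (N * v/(m-1)) * S^2 = N * (v * (m / (m - 1)) * (Q - S^2 / m))"
proof -
  assume m1: "m - 1 > 0"
  then have a: "m - 1 \<noteq> 0" "m \<noteq> 0" by auto
  have e1: "N * v + N * v/(m-1) = N * (v * (m / (m - 1)))" using a by (simp add: field_simps)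
  have e2: "N * (v * (m / (m - 1))) * (S^2 / m) = N * v/(m-1) * S^2" using a by simp
  have "N * (v * (m / (m - 1)) * (Q - S^2 / m)) = N * (v * (m / (m - 1))) * Q - N * (v * (m / (m - 1))) * (S^2 / m)"
    by (metis (no_types) right_diff_distrib mult.assoc)
  then show ?thesis unfolding e2 e1 by simp
qed

definition Vf :: "(nat \<Rightarrow> real) \<Rightarrow> real ^ 'c::finite \<Rightarrow> ('c \<Rightarrow> nat) \<Rightarrow> real" where
  "Vf w u t = (\<Sum>\<alpha>\<in>UNIV. u $ \<alpha> * (w (t \<alpha>) - wbar w CARD('c)))"

lemma dsum0: "(\<Sum>i=1..CARD('c::finite). w i - wbar w CARD('c)) = 0"
  by (simp add: sum_subtractf wbar_def)

lemma dsq: "(\<Sum>i=1..CARD('c::finite). (w i - wbar w CARD('c))^2) = real CARD('c) * var_w w CARD('c)"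
proof -
  define m where "m = CARD('c)"
  have m: "real m > 0" unfolding m_def by simp
  have "(\<Sum>i=1..m. (w i - wbar w m)^2) = (\<Sum>i=1..m. (w i)^2) - 2 * wbar w m * (\<Sum>i=1..m. w i) + real m * (wbar w m)^2"
    by (simp add: power2_diff sum_subtractf sum.distrib sum_distrib_left mult_ac)
  also have "(\<Sum>i=1..m. w i) = real m * wbar w m" using m by (simp add: wbar_def)
  finally have "(\<Sum>i=1..m. (w i - wbar w m)^2) = (\<Sum>i=1..m. (w i)^2) - real m * (wbar w m)^2"
    by (simp add: power2_eq_square)
  also have "\<dots> = real m * var_w w m" using m by (simp add: var_w_def field_simps)
  finally show ?thesis unfolding m_def .
qed

lemma var_w_nonneg: "var_w w CARD('c::finite) \<ge> 0"
proof -
  have "0 \<le> (\<Sum>i=1..CARD('c). (w i - wbar w CARD('c))^2)" by (intro sum_nonneg) auto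
  then show ?thesis unfolding dsq by (simp add: zero_le_mult_iff)
qed

lemma EV0: "(\<Sum>t\<in>rankings. Vf w (u::real^'c::finite) t) = 0"
proof -
  have "(\<Sum>t\<in>rankings. Vf w u t) = (\<Sum>\<alpha>\<in>UNIV. u $ \<alpha> * (\<Sum>t\<in>(rankings::('c \<Rightarrow> nat) set). w (t \<alpha>) - wbar w CARD('c)))"
    unfolding Vf_def sum_distrib_left by (rule sum.swap)
  also have "\<dots> = 0" using dsum0[of w, where 'c='c] by (simp add: E1[where g = "\<lambda>i. w i - wbar w CARD('c)"])
  finally show ?thesis .
qed

lemma EV2:
  assumes m2: "CARD('c::finite) \<ge> 2"
  shows "(\<Sum>t\<in>rankings. (Vf w (u::real^'c) t)^2) =
    real (card (rankings::('c \<Rightarrow> nat) set)) * (var_w w CARD('c) * (real CARD('c) / (real CARD('c) - 1)) *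
      (\<Sum>\<alpha>\<in>UNIV. (u $ \<alpha> - (\<Sum>\<beta>\<in>UNIV. u $ \<beta>) / real CARD('c))^2))"
proof -
  define m where "m = real CARD('c)"
  define N where "N = real (card (rankings::('c \<Rightarrow> nat) set))"
  define d where "d i = w i - wbar w CARD('c)" for i
  define K where "K = N * var_w w CARD('c)"
  define c where "c = K / (m - 1)"
  have m1: "m - 1 > 0" using m2 unfolding m_def by simp
  have C1: "(\<Sum>t\<in>rankings. d (t \<alpha>) * d (t \<alpha>)) = K" for \<alpha> :: 'c
  proof -
    have "(\<Sum>t\<in>rankings. d (t \<alpha>) * d (t \<alpha>)) = (\<Sum>t\<in>rankings. (\<lambda>i. (d i)^2) (t \<alpha>))"
      by (simp add: power2_eq_square)
    also have "\<dots> = N / m * (\<Sum>i=1..CARD('c). (d i)^2)"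
      unfolding N_def m_def by (rule E1)
    also have "\<dots> = K" unfolding d_def dsq K_def m_def by simp
    finally show ?thesis .
  qed
  have C2: "(\<Sum>t\<in>rankings. d (t \<alpha>) * d (t \<beta>)) = - c" if "\<alpha> \<noteq> \<beta>" for \<alpha> \<beta> :: 'c
  proof -
    have "(m - 1) * (\<Sum>t\<in>rankings. d (t \<alpha>) * d (t \<beta>)) = - (\<Sum>t\<in>rankings. d (t \<alpha>) ^ 2)"
      unfolding m_def by (rule E2[OF _ that]) (use dsum0[of w] in \<open>simp add: d_def\<close>)
    also have "(\<Sum>t\<in>rankings. d (t \<alpha>) ^ 2) = K" using C1[of \<alpha>] by (simp add: power2_eq_square)
    finally show ?thesis using m1 unfolding c_def by (simp add: field_simps)
  qed
  have C: "(\<Sum>t\<in>rankings. d (t \<alpha>) * d (t \<beta>)) = (if \<alpha> = \<beta> then K + c else 0) - c" for \<alpha> \<beta> :: 'c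
    using C1 C2 by auto
  have "(\<Sum>t\<in>rankings. (Vf w u t)^2) = (\<Sum>t\<in>rankings. \<Sum>\<alpha>\<in>UNIV. \<Sum>\<beta>\<in>UNIV. u $ \<alpha> * u $ \<beta> * (d (t \<alpha>) * d (t \<beta>)))"
    unfolding Vf_def d_def[symmetric] power2_eq_square sum_product
    by (intro sum.cong refl) (simp add: algebra_simps)
  also have "\<dots> = (\<Sum>\<alpha>\<in>UNIV. \<Sum>\<beta>\<in>UNIV. u $ \<alpha> * u $ \<beta> * (\<Sum>t\<in>rankings. d (t \<alpha>) * d (t \<beta>)))"
    unfolding sum_distrib_left
    by (subst sum.swap, rule sum.cong[OF refl], subst sum.swap, rule refl)
  also have "\<dots> = (\<Sum>\<alpha>\<in>UNIV. \<Sum>\<beta>\<in>UNIV. (if \<alpha> = \<beta> then u $ \<alpha> * u $ \<beta> * (K + c) else 0) - c * (u $ \<alpha> * u $ \<beta>))"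
    unfolding C by (intro sum.cong refl) (simp add: algebra_simps)
  also have "\<dots> = (K + c) * (\<Sum>\<alpha>\<in>UNIV. (u $ \<alpha>)^2) - c * (\<Sum>\<alpha>\<in>UNIV. u $ \<alpha>)^2"
    by (simp add: sum_subtractf sum.delta power2_eq_square sum_product sum_distrib_left algebra_simps)
  also have "\<dots> = N * (var_w w CARD('c) * (m / (m - 1)) * (\<Sum>\<alpha>\<in>UNIV. (u $ \<alpha> - (\<Sum>\<beta>\<in>UNIV. u $ \<beta>) / m)^2))"
  proof -
    have cen: "(\<Sum>\<alpha>\<in>UNIV. (u $ \<alpha> - (\<Sum>\<beta>\<in>UNIV. u $ \<beta>) / m)^2) = (\<Sum>\<alpha>\<in>UNIV. (u $ \<alpha>)^2) - (\<Sum>\<alpha>\<in>UNIV. u $ \<alpha>)^2 / m"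
      unfolding m_def by (rule sum_sq_centered) auto
    show ?thesis unfolding cen
    proof -
      define Q where "Q = (\<Sum>\<alpha>\<in>UNIV. (u $ \<alpha>)^2)"
      define S where "S = (\<Sum>\<alpha>\<in>UNIV. u $ \<alpha>)"
      have "(K + c) * Q - c * S^2 = N * (var_w w CARD('c) * (m / (m - 1)) * (Q - S^2 / m))"
        unfolding c_def K_def by (rule alg1[OF m1])
      then show "(K + c) * (\<Sum>\<alpha>\<in>UNIV. (u $ \<alpha>)^2) - c * (\<Sum>\<alpha>\<in>UNIV. u $ \<alpha>)^2 =
        N * (var_w w CARD('c) * (m / (m - 1)) * ((\<Sum>\<alpha>\<in>UNIV. (u $ \<alpha>)^2) - (\<Sum>\<alpha>\<in>UNIV. u $ \<alpha>)^2 / m))"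
        unfolding Q_def S_def .
    qed
  qed
  finally show ?thesis unfolding N_def m_def .
qed

definition kap :: "(nat \<Rightarrow> real) \<Rightarrow> nat \<Rightarrow> real" where
  "kap w m = sqrt (var_w w m) * sqrt (real m / (real m - 1))"

definition Gm :: "(nat \<Rightarrow> real) \<Rightarrow> ('c::finite \<Rightarrow> real) \<Rightarrow> real ^ 'c" where
  "Gm w Z = (kap w CARD('c)) *\<^sub>R ((\<chi> \<alpha>. Z \<alpha>) - ((\<Sum>\<beta>\<in>UNIV. Z \<beta>) / real CARD('c)) *\<^sub>R ones)"

lemma limit_law_eq: "limit_law w = distr std_normal_vec borel (Gm w)"
  unfolding limit_law_def Gm_def kap_def ..

lemma snv_prob: "prob_space (std_normal_vec :: ('c::finite \<Rightarrow> real) measure)"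
  unfolding std_normal_vec_def by (intro prob_space_PiM real_distribution.axioms(1) real_dist_normal_dist)

lemma Gm_meas: "Gm w \<in> borel_measurable (std_normal_vec :: ('c::finite \<Rightarrow> real) measure)"
proof (subst borel_measurable_euclidean_space, intro ballI)
  fix b :: "real ^ 'c" assume "b \<in> Basis"
  then obtain i where b: "b = axis i 1" by (auto simp: Basis_vec_def)
  have "(\<lambda>Z. Gm w Z \<bullet> b) = (\<lambda>Z. kap w CARD('c) * (Z i - (\<Sum>\<beta>\<in>UNIV. Z \<beta>) / real CARD('c)))"
    by (simp add: b inner_axis Gm_def ones_def)
  also have "\<dots> \<in> borel_measurable std_normal_vec"
    unfolding std_normal_vec_def by measurable
  finally show "(\<lambda>Z. Gm w Z \<bullet> b) \<in> borel_measurable std_normal_vec" .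
qed

lemma uG: "u \<bullet> Gm w Z = (\<Sum>\<alpha>\<in>UNIV. (kap w CARD('c) * (u $ \<alpha> - (\<Sum>\<beta>\<in>UNIV. u $ \<beta>) / real CARD('c))) * Z (\<alpha>::'c::finite))"
proof -
  define k where "k = kap w CARD('c)"
  define a where "a = (\<Sum>\<beta>\<in>UNIV. u $ \<beta>) / real CARD('c)"
  define b where "b = (\<Sum>\<beta>\<in>UNIV. Z \<beta>) / real CARD('c)"
  have "u \<bullet> Gm w Z = (\<Sum>\<alpha>\<in>UNIV. u $ \<alpha> * (k * (Z \<alpha> - b)))"
    unfolding Gm_def inner_vec_def ones_def k_def b_def by (simp add: algebra_simps)
  also have "\<dots> = (\<Sum>\<alpha>\<in>UNIV. k * (u $ \<alpha> * Z \<alpha>) - (k * b) * u $ \<alpha>)"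
    by (intro sum.cong refl) (simp add: algebra_simps)
  also have "\<dots> = k * (\<Sum>\<alpha>\<in>UNIV. u $ \<alpha> * Z \<alpha>) - (k * b) * (\<Sum>\<alpha>\<in>UNIV. u $ \<alpha>)"
    by (simp add: sum_subtractf sum_distrib_left)
  also have "(k * b) * (\<Sum>\<alpha>\<in>UNIV. u $ \<alpha>) = (k * a) * (\<Sum>\<alpha>\<in>UNIV. Z \<alpha>)"
    unfolding a_def b_def by simp
  also have "k * (\<Sum>\<alpha>\<in>UNIV. u $ \<alpha> * Z \<alpha>) - (k * a) * (\<Sum>\<alpha>\<in>UNIV. Z \<alpha>) = (\<Sum>\<alpha>\<in>UNIV. k * (u $ \<alpha> * Z \<alpha>) - (k * a) * Z \<alpha>)"
    by (simp add: sum_subtractf sum_distrib_left)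
  also have "\<dots> = (\<Sum>\<alpha>\<in>UNIV. (k * (u $ \<alpha> - a)) * Z \<alpha>)"
    by (intro sum.cong refl) (simp add: algebra_simps)
  finally show ?thesis unfolding k_def a_def .
qed

lemma gauss_char:
  fixes u :: "real ^ 'c::finite"
  shows "(CLINT x|limit_law w. iexp (u \<bullet> x)) =
     complex_of_real (exp (- (\<Sum>\<alpha>\<in>UNIV. (kap w CARD('c) * (u $ \<alpha> - (\<Sum>\<beta>\<in>UNIV. u $ \<beta>) / real CARD('c)))^2) / 2))"
proof -
  define c where "c \<alpha> = kap w CARD('c) * (u $ \<alpha> - (\<Sum>\<beta>\<in>UNIV. u $ \<beta>) / real CARD('c))" for \<alpha> :: 'c
  interpret P: product_prob_space "\<lambda>_::'c::finite. std_normal_distribution"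
    by (rule product_prob_spaceI) (rule real_distribution.axioms(1)[OF real_dist_normal_dist])
  have "(CLINT x|limit_law w. iexp (u \<bullet> x)) = (CLINT Z|std_normal_vec. iexp (u \<bullet> Gm w Z))"
    unfolding limit_law_eq by (rule integral_distr[OF Gm_meas]) measurable
  also have "\<dots> = (CLINT Z|std_normal_vec. (\<Prod>\<alpha>\<in>UNIV. iexp (c \<alpha> * Z \<alpha>)))"
    by (simp add: uG c_def exp_sum[symmetric] sum_distrib_left)
  also have "\<dots> = (\<Prod>\<alpha>\<in>UNIV. CLINT x|std_normal_distribution. iexp (c \<alpha> * x))"
    unfolding std_normal_vec_def
    by (rule P.product_integral_prod[where f = "\<lambda>\<alpha> x. iexp (c \<alpha> * x)"])
       (auto intro!: prob_space.integrable_iexp[OF real_distribution.axioms(1)[OF real_dist_normal_dist]])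
  also have "\<dots> = (\<Prod>\<alpha>\<in>UNIV. complex_of_real (exp (- ((c \<alpha>)^2) / 2)))"
    using char_std_normal_distribution unfolding char_def by (simp add: fun_eq_iff)
  also have "\<dots> = complex_of_real (\<Prod>\<alpha>\<in>UNIV. exp (- ((c \<alpha>)^2) / 2))"
    by (simp add: of_real_prod)
  also have "(\<Prod>\<alpha>\<in>UNIV. exp (- ((c \<alpha>)^2) / 2)) = exp (\<Sum>\<alpha>\<in>UNIV. - ((c \<alpha>)^2) / 2)"
    by (simp add: exp_sum)
  also have "(\<Sum>\<alpha>\<in>UNIV. - ((c \<alpha>)^2) / 2) = - (\<Sum>\<alpha>\<in>UNIV. (c \<alpha>)^2) / 2"
    by (simp add: sum_negf sum_divide_distrib)
  finally show ?thesis unfolding c_def .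
qed

lemma IC_support:
  assumes "p \<in> set_pmf (IC_profile n :: (nat \<Rightarrow> ('c::finite \<Rightarrow> nat)) pmf)" "i < n"
  shows "p i \<in> rankings"
  using assms unfolding IC_profile_def
  by (auto simp: set_Pi_pmf PiE_dflt_def set_pmf_of_set[OF rank_ne rank_fin])

lemma score_eq:
  assumes "\<forall>i<n. p i \<in> (rankings :: ('c::finite \<Rightarrow> nat) set)"
  shows "score w n p $ \<alpha> = (\<Sum>i<n. w (p i \<alpha>))"
proof -
  have "score w n p $ \<alpha> = (\<Sum>t\<in>rankings. real (card {i. i < n \<and> p i = t}) * w (t \<alpha>))"
    unfolding score_def N_count_def sigma_def by simp
  also have "\<dots> = (\<Sum>t\<in>rankings. \<Sum>i\<in>{i\<in>{..<n}. p i = t}. w (p i \<alpha>))"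
  proof (intro sum.cong refl)
    fix t :: "'c \<Rightarrow> nat"
    have "(\<Sum>i\<in>{i\<in>{..<n}. p i = t}. w (p i \<alpha>)) = (\<Sum>i\<in>{i\<in>{..<n}. p i = t}. w (t \<alpha>))"
      by (intro sum.cong refl) auto
    also have "\<dots> = real (card {i. i < n \<and> p i = t}) * w (t \<alpha>)" by simp
    finally show "real (card {i. i < n \<and> p i = t}) * w (t \<alpha>) = (\<Sum>i\<in>{i\<in>{..<n}. p i = t}. w (p i \<alpha>))" ..
  qed
  also have "\<dots> = (\<Sum>i<n. w (p i \<alpha>))"
    by (rule sum.group) (use assms rank_fin in auto)
  finally show ?thesis .
qed

lemma u_scaled:
  assumes "\<forall>i<n. p i \<in> (rankings :: ('c::finite \<Rightarrow> nat) set)"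
  shows "u \<bullet> ((1 / sqrt (real n)) *\<^sub>R (score w n p - (real n * wbar w CARD('c)) *\<^sub>R ones))
    = (\<Sum>i<n. Vf w u (p i) / sqrt (real n))"
proof -
  define wb where "wb = wbar w CARD('c)"
  have "u \<bullet> ((1 / sqrt (real n)) *\<^sub>R (score w n p - (real n * wb) *\<^sub>R ones))
      = (\<Sum>\<alpha>\<in>UNIV. u $ \<alpha> * ((\<Sum>i<n. w (p i \<alpha>)) - real n * wb)) / sqrt (real n)"
    unfolding inner_vec_def by (simp add: score_eq[OF assms] ones_def sum_divide_distrib)
  also have "(\<Sum>\<alpha>\<in>UNIV. u $ \<alpha> * ((\<Sum>i<n. w (p i \<alpha>)) - real n * wb)) = (\<Sum>\<alpha>\<in>UNIV. \<Sum>i<n. u $ \<alpha> * (w (p i \<alpha>) - wb))"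
    by (intro sum.cong refl) (simp add: sum_subtractf sum_distrib_left[symmetric])
  also have "\<dots> = (\<Sum>i<n. Vf w u (p i))"
    unfolding Vf_def wb_def by (rule sum.swap)
  finally show ?thesis unfolding wb_def by (simp add: sum_divide_distrib)
qed

definition mu :: "(nat \<Rightarrow> real) \<Rightarrow> real ^ 'c::finite \<Rightarrow> real measure" where
  "mu w u = distr (measure_pmf (pmf_of_set (rankings :: ('c \<Rightarrow> nat) set))) borel (Vf w u)"

lemma score_char:
  fixes u :: "real ^ 'c::finite"
  shows "(CLINT x|scaled_score_law w n. iexp (u \<bullet> x)) = (char (mu w u) (1 / sqrt (real n))) ^ n"
proof -
  define IC where "IC = measure_pmf (IC_profile n :: (nat \<Rightarrow> ('c \<Rightarrow> nat)) pmf)"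
  interpret IC: prob_space IC unfolding IC_def by (rule prob_space_measure_pmf)
  define X where "X i p = Vf w u (p i) / sqrt (real n)" for i and p :: "nat \<Rightarrow> 'c \<Rightarrow> nat"
  have "(CLINT x|scaled_score_law w n. iexp (u \<bullet> x)) = (CLINT p|IC. iexp (\<Sum>i<n. X i p))"
    unfolding scaled_score_law_def integral_map_pmf IC_def
  proof (rule integral_cong_AE)
    show "AE p in measure_pmf (IC_profile n). iexp (u \<bullet> ((1 / sqrt (real n)) *\<^sub>R (score w n p - (real n * wbar w CARD('c)) *\<^sub>R ones))) = iexp (\<Sum>i<n. X i p)"
    proof (rule AE_pmfI)
      fix p assume "p \<in> set_pmf (IC_profile n :: (nat \<Rightarrow> ('c \<Rightarrow> nat)) pmf)"
      then have "\<forall>i<n. p i \<in> rankings" using IC_support by blast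
      then show "iexp (u \<bullet> ((1 / sqrt (real n)) *\<^sub>R (score w n p - (real n * wbar w CARD('c)) *\<^sub>R ones))) = iexp (\<Sum>i<n. X i p)"
        by (simp only: u_scaled X_def)
    qed
  qed auto
  also have "\<dots> = char (distr IC borel (\<lambda>p. \<Sum>i<n. X i p)) 1"
    unfolding char_def by (subst integral_distr) (auto simp: IC_def)
  also have "\<dots> = (\<Prod>i<n. char (distr IC borel (X i)) 1)"
  proof (rule IC.char_distr_sum)
    have "IC.indep_vars (\<lambda>_. count_space UNIV) (\<lambda>x f. f x) {..<n}"
      unfolding IC_def IC_profile_def by (rule indep_vars_Pi_pmf) simp
    then show "IC.indep_vars (\<lambda>i. borel) X {..<n}"
      unfolding X_def by (rule IC.indep_vars_compose2) simp
  qed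
  also have "\<dots> = (\<Prod>i<n. char (mu w u) (1 / sqrt (real n)))"
  proof (intro prod.cong refl)
    fix i assume i: "i \<in> {..<n}"
    have "char (distr IC borel (X i)) 1 = (CLINT p|IC. iexp (X i p))"
      unfolding char_def by (subst integral_distr) (auto simp: IC_def)
    also have "\<dots> = (CLINT p|map_pmf (\<lambda>f. f i) (IC_profile n :: (nat \<Rightarrow> ('c \<Rightarrow> nat)) pmf). iexp (Vf w u p / sqrt (real n)))"
      unfolding integral_map_pmf IC_def X_def ..
    also have "map_pmf (\<lambda>f. f i) (IC_profile n :: (nat \<Rightarrow> ('c \<Rightarrow> nat)) pmf) = pmf_of_set rankings"
      unfolding IC_profile_def using i by (subst Pi_pmf_component) auto
    also have "(CLINT t|measure_pmf (pmf_of_set rankings). iexp (Vf w u t / sqrt (real n))) = char (mu w u) (1 / sqrt (real n))"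
      unfolding char_def mu_def by (subst integral_distr) auto
    finally show "char (distr IC borel (X i)) 1 = char (mu w u) (1 / sqrt (real n))" .
  qed
  also have "\<dots> = (char (mu w u) (1 / sqrt (real n))) ^ n" by simp
  finally show ?thesis .
qed

lemma (in real_distribution) char_pow_lim:
  assumes i1: "integrable M (\<lambda>x. x)" and e1: "expectation (\<lambda>x. x) = 0"
    and i2: "integrable M (\<lambda>x. x^2)" and e2: "expectation (\<lambda>x. x^2) = s"
  shows "(\<lambda>n. (char M (1 / sqrt (real n))) ^ n) \<longlonglongrightarrow> complex_of_real (exp (- s / 2))"
proof -
  have s0: "s \<ge> 0" unfolding e2[symmetric] by (rule integral_nonneg_AE) simp
  have var: "variance (\<lambda>x. x) = s" using e1 e2 by simp
  define E where "E n = expectation (\<lambda>x. min (6 * x\<^sup>2) (\<bar>1 / sqrt (real n)\<bar> * \<bar>x\<bar> ^ 3))" for n :: nat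
  have main: "\<forall>\<^sub>F n in sequentially.
      cmod ((char M (1 / sqrt (real n))) ^ n - (1 + (-s / 2) / n)^n) \<le> 1 / 6 * E n"
  proof (rule eventually_sequentiallyI)
    fix n :: nat
    assume "n \<ge> nat (ceiling (s / 4)) + 1"
    then have n: "real n \<ge> s / 4" "n > 0" by linarith+
    let ?t = "1 / sqrt (real n)"
    have "cmod (char M ?t - (1 - ?t^2 * s / 2)) \<le> (?t^2 / 6) * E n"
      unfolding E_def by (rule char_approx3[OF i1 e1 i2 var])
    also have "?t^2 = 1 / n" using n by (simp add: power_divide)
    finally have **: "cmod (char M ?t - (1 + (-s / 2) / n)) \<le> 1 / (6 * n) * E n"
      by (simp add: field_simps)
    have "norm ((char M ?t)^n - (complex_of_real (1 + (-s / 2) / n))^n) \<le>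
         n * norm (char M ?t - (complex_of_real (1 + (-s / 2) / n)))"
    proof (rule norm_power_diff)
      show "norm (char M ?t) \<le> 1" by (rule cmod_char_le_1)
      have "s / 2 / n \<le> 2" using n s0 by (simp add: field_simps)
      moreover have "0 \<le> s / 2 / n" using s0 by simp
      ultimately show "norm (complex_of_real (1 + (-s / 2) / n)) \<le> 1"
        by (simp only: norm_of_real abs_le_iff) simp
    qed
    also have "\<dots> \<le> n * (1 / (6 * n) * E n)"
      using ** by (intro mult_left_mono) (simp_all del: of_real_diff add: of_real_add[symmetric] of_real_divide)
    also have "\<dots> = 1 / 6 * E n" using n by simp
    finally show "cmod ((char M ?t) ^ n - (1 + (-s / 2) / n)^n) \<le> 1 / 6 * E n" by simp
  qed
  have "(\<lambda>n. E n) \<longlonglongrightarrow> (LINT x|M. 0)"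
    unfolding E_def
  proof (rule integral_dominated_convergence[where w = "\<lambda>x. 6 * x^2"])
    show "integrable M (\<lambda>x. 6 * x^2)" using i2 by simp
    show "AE x in M. (\<lambda>n. min (6 * x\<^sup>2) (\<bar>1 / sqrt (real n)\<bar> * \<bar>x\<bar> ^ 3)) \<longlonglongrightarrow> 0"
    proof (rule AE_I2)
      fix x :: real
      have "(\<lambda>n. \<bar>1 / sqrt (real n)\<bar> * \<bar>x\<bar> ^ 3) \<longlonglongrightarrow> 0 * \<bar>x\<bar> ^ 3"
      proof (rule tendsto_mult)
        have "(\<lambda>n. 1 / sqrt (real n)) \<longlonglongrightarrow> 0"
          by (intro tendsto_divide_0[OF tendsto_const] filterlim_at_top_imp_at_infinity
              filterlim_compose[OF sqrt_at_top filterlim_real_sequentially])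
        then show "(\<lambda>n. \<bar>1 / sqrt (real n)\<bar>) \<longlonglongrightarrow> 0" using tendsto_rabs_zero by blast
      qed simp
      then have "(\<lambda>n. min (6 * x\<^sup>2) (\<bar>1 / sqrt (real n)\<bar> * \<bar>x\<bar> ^ 3)) \<longlonglongrightarrow> min (6 * x\<^sup>2) 0"
        by (intro tendsto_min tendsto_const) simp
      then show "(\<lambda>n. min (6 * x\<^sup>2) (\<bar>1 / sqrt (real n)\<bar> * \<bar>x\<bar> ^ 3)) \<longlonglongrightarrow> 0" by simp
    qed
  qed auto
  then have *: "(\<lambda>n. 1 / 6 * E n) \<longlonglongrightarrow> 0"
    by (simp add: tendsto_mult_right_zero)
  have "(\<lambda>n. complex_of_real ((1 + (-s / 2) / n)^n)) \<longlonglongrightarrow> complex_of_real (exp (-s / 2))"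
    by (rule isCont_tendsto_compose [OF _ tendsto_exp_limit_sequentially]) auto
  then show ?thesis
    by (rule Lim_transform) (rule Lim_null_comparison [OF main *])
qed

lemma mu_rd: "real_distribution (mu w (u::real^'c::finite))"
  unfolding mu_def by (rule prob_space.real_distribution_distr) (auto intro: prob_space_measure_pmf)

lemma mu_int: "f \<in> borel_measurable borel \<Longrightarrow> integrable (mu w (u::real^'c::finite)) (f :: real \<Rightarrow> real)"
  unfolding mu_def
  by (subst integrable_distr_eq) (auto intro!: integrable_measure_pmf_finite simp: rank_fin rank_ne)

lemma mu_integral: "f \<in> borel_measurable borel \<Longrightarrow> integral\<^sup>L (mu w (u::real^'c::finite)) (f :: real \<Rightarrow> real) =
    (\<Sum>t\<in>(rankings::('c \<Rightarrow> nat) set). f (Vf w u t)) / card (rankings::('c \<Rightarrow> nat) set)"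
  unfolding mu_def
  by (subst integral_distr) (auto simp: integral_pmf_of_set[OF rank_ne rank_fin])

lemma score_char_lim:
  fixes u :: "real ^ 'c::finite"
  assumes m2: "CARD('c) \<ge> 2"
  shows "(\<lambda>n. CLINT x|scaled_score_law w n. iexp (u \<bullet> x)) \<longlonglongrightarrow> (CLINT x|limit_law w. iexp (u \<bullet> x))"
proof -
  interpret mu: real_distribution "mu w u" by (rule mu_rd)
  define N where "N = real (card (rankings::('c \<Rightarrow> nat) set))"
  have N: "N > 0" unfolding N_def using rank_card_pos by simp
  define s where "s = (\<Sum>\<alpha>\<in>UNIV. (kap w CARD('c) * (u $ \<alpha> - (\<Sum>\<beta>\<in>UNIV. u $ \<beta>) / real CARD('c)))^2)"
  have m1: "real CARD('c) - 1 > 0" using m2 by simp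
  have kap2: "(kap w CARD('c))^2 = var_w w CARD('c) * (real CARD('c) / (real CARD('c) - 1))"
    unfolding kap_def using var_w_nonneg[where 'c='c, of w] m1
    by (simp add: power_mult_distrib)
  have e2: "mu.expectation (\<lambda>x. x^2) = s"
  proof -
    have "mu.expectation (\<lambda>x. x^2) = (\<Sum>t\<in>(rankings::('c \<Rightarrow> nat) set). (Vf w u t)^2) / N"
      unfolding N_def by (rule mu_integral) simp
    also have "\<dots> = var_w w CARD('c) * (real CARD('c) / (real CARD('c) - 1)) *
      (\<Sum>\<alpha>\<in>UNIV. (u $ \<alpha> - (\<Sum>\<beta>\<in>UNIV. u $ \<beta>) / real CARD('c))^2)"
      unfolding EV2[OF m2] N_def[symmetric] using N by simp
    also have "\<dots> = s" unfolding s_def power_mult_distrib sum_distrib_left[symmetric] kap2 ..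
    finally show ?thesis .
  qed
  have e1: "mu.expectation (\<lambda>x. x) = 0"
    by (subst mu_integral) (simp_all add: EV0)
  have "(\<lambda>n. (char (mu w u) (1 / sqrt (real n))) ^ n) \<longlonglongrightarrow> complex_of_real (exp (- s / 2))"
    by (rule mu.char_pow_lim[OF _ e1 _ e2]) (simp_all add: mu_int)
  then show ?thesis unfolding score_char gauss_char s_def .
qed

theorem proposition2:
  fixes w :: "nat \<Rightarrow> real"
  assumes "CARD('c::finite) \<ge> 3"
    and "w 1 = 1" and "w CARD('c) = 0"
    and "\<And>i j. 1 \<le> i \<Longrightarrow> i \<le> j \<Longrightarrow> j \<le> CARD('c) \<Longrightarrow> w j \<le> w i"
  shows "conv_in_distr (\<lambda>n. scaled_score_law w n :: (real ^ 'c) measure) (limit_law w)"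
proof (rule levy_multi)
  show "prob_space (scaled_score_law w n :: (real ^ 'c) measure)" for n
    unfolding scaled_score_law_def by (rule prob_space_measure_pmf)
  show "sets borel \<subseteq> sets (scaled_score_law w n :: (real ^ 'c) measure)" for n
    unfolding scaled_score_law_def by simp
  show "space (scaled_score_law w n :: (real ^ 'c) measure) = UNIV" for n
    unfolding scaled_score_law_def by simp
  show "prob_space (limit_law w :: (real ^ 'c) measure)"
    unfolding limit_law_eq by (rule prob_space.prob_space_distr[OF snv_prob Gm_meas])
  show "sets borel \<subseteq> sets (limit_law w :: (real ^ 'c) measure)"
    unfolding limit_law_eq by simp
  show "space (limit_law w :: (real ^ 'c) measure) = UNIV"
    unfolding limit_law_eq by simp
  show "(\<lambda>n. CLINT x|scaled_score_law w n. iexp (u \<bullet> x)) \<longlonglongrightarrow> (CLINT x|limit_law w. iexp (u \<bullet> (x :: real ^ 'c)))" for u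
    by (rule score_char_lim) (use assms(1) in simp)
qed

end
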